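(* $$\sup_{x\in[0,1)}\int_{\Sigma\times\mathbb{R}\times\{x\}}\ \sup_{k\ge1}g_k(\mathbf{j},y,x)\,d\mu_x(\mathbf{j},y,x)<\infty.$$
   Context: $b\ge2$ integer, $\gamma\in(0,1)$, $\phi$ a $\mathbb{Z}$-periodic Lipschitz function. $\Lambda=\{0,\dots,b-1\}$, $\Sigma=\Lambda^{\mathbb{Z}_+}$, $\nu$ uniform on $\Lambda$. $S(x,\mathbf{j})=\sum_{n\ge1}\gamma^{n-1}\phi\big(\frac{x+j_1+j_2b+\cdots+j_nb^{n-1}}{b^n}\big)$. $\mu_x$ is the image of $\nu^{\mathbb{Z}_+}$ under $\mathbf{j}\mapsto(\mathbf{j},S(x,\mathbf{j}),x)$. $B^T_{(\mathbf{j},y,x)}(r)=\{(\mathbf{j}',y',x')\in\Sigma\times\mathbb{R}\times[0,1):|y-y'|\le r\}$, $\mathscr{P}(\mathbf{j},y,x)=[j_1]\times\mathbb{R}\times[0,1)$ with $[j_1]$ the cylinder of sequences with first symbol $j_1$. For $k\in\mathbb{Z}_+$, $g_k(\mathbf{j},y,x)=-\log\frac{\mu_x(B^T_{(\mathbf{j},y,x)}(\gamma^k)\cap\mathscr{P}(\mathbf{j},y,x))}{\mu_x(B^T_{(\mathbf{j},y,x)}(\gamma^k))}$. *)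

theory Defs
  imports "HOL-Probability.Probability"
begin

text \<open>Symbol space Sigma = Lambda^{Z_+}, Lambda = {0,...,b-1}; sequences are indexed by
  the positive integers {1..}, so j 1 is the first symbol j_1.\<close>

definition nuN :: "nat \<Rightarrow> (nat \<Rightarrow> nat) measure" where
  "nuN b = PiM {1..} (\<lambda>_. uniform_count_measure {..<b})"

definition Ssum :: "nat \<Rightarrow> real \<Rightarrow> (real \<Rightarrow> real) \<Rightarrow> real \<Rightarrow> (nat \<Rightarrow> nat) \<Rightarrow> real" where
  "Ssum b \<gamma> \<phi> x j =
     (\<Sum>n. \<gamma> ^ n * \<phi> ((x + (\<Sum>i = 1..Suc n. real (j i) * real b ^ (i - 1))) / real b ^ Suc n))"

definition ambient :: "nat \<Rightarrow> ((nat \<Rightarrow> nat) \<times> real \<times> real) measure" where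
  "ambient b = PiM {1..} (\<lambda>_. count_space {..<b}) \<Otimes>\<^sub>M (lborel \<Otimes>\<^sub>M restrict_space lborel {0..<1})"

definition mu :: "nat \<Rightarrow> real \<Rightarrow> (real \<Rightarrow> real) \<Rightarrow> real \<Rightarrow> ((nat \<Rightarrow> nat) \<times> real \<times> real) measure" where
  "mu b \<gamma> \<phi> x = distr (nuN b) (ambient b) (\<lambda>j. (j, Ssum b \<gamma> \<phi> x j, x))"

definition BT :: "nat \<Rightarrow> (nat \<Rightarrow> nat) \<times> real \<times> real \<Rightarrow> real \<Rightarrow> ((nat \<Rightarrow> nat) \<times> real \<times> real) set" where
  "BT b p r = {(j', y', x') \<in> space (ambient b). \<bar>fst (snd p) - y'\<bar> \<le> r}"

definition Part :: "nat \<Rightarrow> (nat \<Rightarrow> nat) \<times> real \<times> real \<Rightarrow> ((nat \<Rightarrow> nat) \<times> real \<times> real) set" where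
  "Part b p = {(j', y', x') \<in> space (ambient b). j' 1 = fst p 1}"

text \<open>g_k = -log (mu_x(B cap P) / mu_x(B)), with value infinity when the ratio is 0
  (or undefined 0/0), which only happens on a mu_x-null set.\<close>

definition gk :: "nat \<Rightarrow> real \<Rightarrow> (real \<Rightarrow> real) \<Rightarrow> nat \<Rightarrow> (nat \<Rightarrow> nat) \<times> real \<times> real \<Rightarrow> ennreal" where
  "gk b \<gamma> \<phi> k p =
    (let x = snd (snd p);
         q = measure (mu b \<gamma> \<phi> x) (BT b p (\<gamma> ^ k) \<inter> Part b p)
             / measure (mu b \<gamma> \<phi> x) (BT b p (\<gamma> ^ k))
     in if q > 0 then ennreal (- ln q) else \<infinity>)"

end

theory Submission
  imports Defs
begin


lemma three_intervals:
  fixes l u :: "'a \<Rightarrow> real"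
  assumes "finite S" "card S \<ge> 3" "\<forall>y\<in>S. l y \<le> z \<and> z \<le> u y"
  shows "\<exists>m\<in>S. \<exists>i\<in>S. \<exists>j\<in>S. i \<noteq> m \<and> j \<noteq> m \<and> {l m..u m} \<subseteq> {l i..u i} \<union> {l j..u j}"
proof -
  have ne: "S \<noteq> {}" using assms(2) by auto
  obtain i where i: "i \<in> S" "l i = Min (l ` S)"
  proof -
    have "Min (l ` S) \<in> l ` S" using assms(1) ne by (intro Min_in) auto
    then show ?thesis using that by auto
  qed
  obtain j where j: "j \<in> S" "u j = Max (u ` S)"
  proof -
    have "Max (u ` S) \<in> u ` S" using assms(1) ne by (intro Max_in) auto
    then show ?thesis using that by auto
  qed
  have "card (S - {i, j}) \<ge> 1"
  proof -
    have "card {i, j} \<le> 2" by (simp add: card_insert_if)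
    then have "card (S - {i,j}) \<ge> card S - 2" using diff_card_le_card_Diff[of "{i,j}" S] by auto
    then show ?thesis using assms(2) by linarith
  qed
  then obtain m where m: "m \<in> S" "m \<noteq> i" "m \<noteq> j"
  proof -
    have "S - {i,j} \<noteq> {}" using \<open>card (S - {i, j}) \<ge> 1\<close> by (metis card.empty not_one_le_zero)
    then show ?thesis using that by blast
  qed
  have li: "l i \<le> l m" using i m assms(1) by auto
  have uj: "u m \<le> u j" using j m assms(1) by auto
  have "{l m..u m} \<subseteq> {l i..u i} \<union> {l j..u j}"
  proof
    fix t assume t: "t \<in> {l m..u m}"
    show "t \<in> {l i..u i} \<union> {l j..u j}"
    proof (cases "t \<le> z")
      case True then show ?thesis using t li assms(3) i by auto
    next
      case False then show ?thesis using t uj assms(3) j by auto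
    qed
  qed
  then show ?thesis
    apply -
    apply (rule bexI[OF _ m(1)], rule bexI[OF _ i(1)], rule bexI[OF _ j(1)])
    using m(2,3) by auto
qed

lemma core_cover:
  fixes N Na :: "real measure" and lam :: real
  assumes N: "finite_measure N" "sets N = sets borel"
   and Na: "finite_measure Na" "sets Na = sets borel"
   and lam: "0 \<le> lam"
   and E: "E \<in> sets borel"
   and cov: "\<And>y. y \<in> E \<Longrightarrow> \<exists>r>0. measure Na {y-r..y+r} \<le> lam * measure N {y-r..y+r}"
  shows "emeasure Na E \<le> ennreal (2 * lam * measure N (space N))"
proof -
  have finNa: "emeasure Na (space Na) \<noteq> \<infinity>"
    using Na(1) finite_measure.emeasure_finite by (simp add: finite_measure.emeasure_finite)
  have "emeasure Na E = (SUP K \<in> {K. K \<subseteq> E \<and> compact K}. emeasure Na K)"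
    by (rule inner_regular[OF Na(2) finNa E])
  also have "\<dots> \<le> ennreal (2 * lam * measure N (space N))"
  proof (rule SUP_least)
    fix K assume "K \<in> {K. K \<subseteq> E \<and> compact K}"
    then have KE: "K \<subseteq> E" and Kc: "compact K" by auto
    have "\<forall>y\<in>K. \<exists>r>0. measure Na {y-r..y+r} \<le> lam * measure N {y-r..y+r}"
      using cov KE by blast
    then obtain r where r: "\<And>y. y \<in> K \<Longrightarrow> r y > 0 \<and> measure Na {y - r y..y + r y} \<le> lam * measure N {y - r y..y + r y}"
      by metis
    define I where "I = (\<lambda>y. {y - r y..y + r y})"
    obtain C where C: "C \<subseteq> K" "finite C" "K \<subseteq> (\<Union>c\<in>C. ball c (r c))"
    proof (rule compactE_image[OF Kc, of K "\<lambda>y. ball y (r y)"])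
      show "\<And>T. T \<in> K \<Longrightarrow> open (ball T (r T))" by simp
      show "K \<subseteq> (\<Union>c\<in>K. ball c (r c))" using r by force
    qed (use that in auto)
    have "K \<subseteq> (\<Union>c\<in>C. I c)"
    proof
      fix z assume "z \<in> K"
      then obtain c where "c \<in> C" "z \<in> ball c (r c)" using C by auto
      then have "z \<in> I c" unfolding I_def by (auto simp: dist_real_def)
      then show "z \<in> (\<Union>c\<in>C. I c)" using \<open>c \<in> C\<close> by auto
    qed
    define P where "P = (\<lambda>D. D \<subseteq> C \<and> K \<subseteq> (\<Union>c\<in>D. I c))"
    have "P C" using \<open>K \<subseteq> (\<Union>c\<in>C. I c)\<close> P_def by auto
    then obtain D where D: "P D" and Dmin: "\<And>D'. P D' \<Longrightarrow> card D \<le> card D'"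
      using ex_has_least_nat[of P C card] by blast
    have Dfin: "finite D" using D C(2) P_def finite_subset by blast
    have DK: "D \<subseteq> K" using D C(1) P_def by auto
    have overlap: "card {c\<in>D. z \<in> I c} \<le> 2" for z
    proof (rule ccontr)
      assume "\<not> card {c\<in>D. z \<in> I c} \<le> 2"
      then have c3: "card {c\<in>D. z \<in> I c} \<ge> 3" by simp
      have "\<forall>y\<in>{c\<in>D. z \<in> I c}. y - r y \<le> z \<and> z \<le> y + r y" unfolding I_def by auto
      from three_intervals[OF _ c3 this] Dfin
      obtain m i j where mij: "m \<in> D" "i \<in> D" "j \<in> D" "i \<noteq> m" "j \<noteq> m"
        "I m \<subseteq> I i \<union> I j" unfolding I_def by auto
      have "P (D - {m})"
        unfolding P_def
      proof
        show "D - {m} \<subseteq> C" using D P_def by auto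
        show "K \<subseteq> (\<Union>c\<in>D - {m}. I c)"
        proof
          fix t assume "t \<in> K"
          then obtain c where c: "c \<in> D" "t \<in> I c" using D P_def by auto
          show "t \<in> (\<Union>c\<in>D - {m}. I c)"
          proof (cases "c = m")
            case True
            then have "t \<in> I i \<or> t \<in> I j" using c mij by auto
            then show ?thesis using mij by auto
          next
            case False then show ?thesis using c by auto
          qed
        qed
      qed
      then have "card D \<le> card (D - {m})" by (rule Dmin)
      moreover have "card (D - {m}) < card D" using Dfin mij(1) by (meson card_Diff1_less)
      ultimately show False by simp
    qed
    have Isets: "I c \<in> sets borel" for c unfolding I_def by simp
    have Ksets: "K \<in> sets borel" using Kc by (simp add: compact_imp_closed borel_closed)
    have "measure Na K \<le> measure Na (\<Union>c\<in>D. I c)"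
      using D P_def Na Isets Dfin
      by (intro finite_measure.finite_measure_mono) auto
    also have "\<dots> \<le> (\<Sum>c\<in>D. measure Na (I c))"
      using Na Isets Dfin by (intro finite_measure.finite_measure_subadditive_finite) auto
    also have "\<dots> \<le> (\<Sum>c\<in>D. lam * measure N (I c))"
      using r DK unfolding I_def by (intro sum_mono) auto
    also have "\<dots> = lam * (\<Sum>c\<in>D. measure N (I c))" by (simp add: sum_distrib_left)
    also have "(\<Sum>c\<in>D. measure N (I c)) \<le> 2 * measure N (space N)"
    proof -
      interpret finite_measure N by (rule N(1))
      have "(\<Sum>c\<in>D. measure N (I c)) = (\<Sum>c\<in>D. integral\<^sup>L N (indicator (I c)))"
        using Isets N(2) by simp
      also have "\<dots> = integral\<^sup>L N (\<lambda>z. \<Sum>c\<in>D. indicator (I c) z)"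
        using Isets N(2) by (intro Bochner_Integration.integral_sum[symmetric] integrable_real_indicator) (auto simp: emeasure_eq_measure)
      also have "\<dots> \<le> integral\<^sup>L N (\<lambda>z. 2)"
      proof (rule integral_mono)
        show "integrable N (\<lambda>z. \<Sum>c\<in>D. indicator (I c) z :: real)"
          using Isets N(2) by (intro Bochner_Integration.integrable_sum integrable_real_indicator) (auto simp: emeasure_eq_measure)
        show "integrable N (\<lambda>z. 2::real)" by auto
        fix z
        have "(\<Sum>c\<in>D. indicator (I c) z :: real) = real (card {c\<in>D. z \<in> I c})"
          using Dfin by (simp add: indicator_def sum.If_cases Int_def conj_commute)
        also have "\<dots> \<le> 2" using overlap[of z] by simp
        finally show "(\<Sum>c\<in>D. indicator (I c) z :: real) \<le> 2" .
      qed
      also have "\<dots> = 2 * measure N (space N)" by simp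
      finally show ?thesis .
    qed
    then have "lam * (\<Sum>c\<in>D. measure N (I c)) \<le> lam * (2 * measure N (space N))"
      using lam by (intro mult_left_mono) auto
    finally have "measure Na K \<le> 2 * lam * measure N (space N)" by simp
    then show "emeasure Na K \<le> ennreal (2 * lam * measure N (space N))"
      using finite_measure.emeasure_eq_measure[OF Na(1)] by (simp add: ennreal_leI)
  qed
  finally show ?thesis .
qed



lemma prob_nuN: "b \<ge> 1 \<Longrightarrow> prob_space (nuN b)"
  unfolding nuN_def
  by (intro prob_space_PiM prob_space_uniform_count_measure) (auto simp: lessThan_empty_iff)

lemma space_nuN: "space (nuN b) = PiE {1..} (\<lambda>_. {..<b})"
  unfolding nuN_def by (simp add: space_PiM space_uniform_count_measure)

lemma lip_meas:
  assumes "\<exists>L. lipschitz_on L UNIV \<phi>"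
  shows "\<phi> \<in> borel_measurable borel"
proof -
  obtain L where "lipschitz_on L UNIV \<phi>" using assms by auto
  then have "continuous_on UNIV \<phi>" by (rule lipschitz_on_continuous_on)
  then show ?thesis by (rule borel_measurable_continuous_onI)
qed

lemma Ssum_meas:
  assumes "\<phi> \<in> borel_measurable borel"
  shows "(\<lambda>j. Ssum b \<gamma> \<phi> x j) \<in> borel_measurable (nuN b)"
proof -
  note [measurable] = assms
  have comp: "(\<lambda>j. real (j i)) \<in> borel_measurable (nuN b)" if "i \<ge> 1" for i
  proof -
    have "(\<lambda>j. j i) \<in> measurable (nuN b) (uniform_count_measure {..<b})"
      unfolding nuN_def using that by (intro measurable_component_singleton) auto
    moreover have "real \<in> measurable (uniform_count_measure {..<b}) borel"
      by (simp add: measurable_def sets_uniform_count_measure space_uniform_count_measure)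
    ultimately show ?thesis using measurable_compose by blast
  qed
  show ?thesis
    unfolding Ssum_def
    apply (rule borel_measurable_suminf)
    apply (intro borel_measurable_times borel_measurable_const)
    apply (rule measurable_compose[OF _ assms])
    apply (intro borel_measurable_divide borel_measurable_add borel_measurable_const borel_measurable_sum borel_measurable_times)
    using comp by auto
qed

lemma F_meas:
  assumes "\<phi> \<in> borel_measurable borel" "x \<in> {0..<1}"
  shows "(\<lambda>j. (j, Ssum b \<gamma> \<phi> x j, x)) \<in> measurable (nuN b) (ambient b)"
  unfolding ambient_def
proof (intro measurable_Pair)
  show "(\<lambda>j. j) \<in> measurable (nuN b) (PiM {1..} (\<lambda>_. count_space {..<b}))"
  proof -
    have "sets (nuN b) = sets (PiM {1..} (\<lambda>_. count_space {..<b}))"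
      unfolding nuN_def by (intro sets_PiM_cong) (auto simp: sets_uniform_count_measure)
    then show ?thesis by (simp add: measurable_ident_sets)
  qed
  show "(\<lambda>j. Ssum b \<gamma> \<phi> x j) \<in> measurable (nuN b) lborel"
    using Ssum_meas[OF assms(1)] by simp
  show "(\<lambda>j. x) \<in> measurable (nuN b) (restrict_space lborel {0..<1})"
    using assms(2) by (intro measurable_const) (auto simp: space_restrict_space)
qed

lemma measure_interval_meas:
  fixes N :: "real measure"
  assumes "finite_measure N" "sets N = sets borel" "r \<ge> 0"
  shows "(\<lambda>y. measure N {y-r..y+r}) \<in> borel_measurable borel"
proof -
  interpret finite_measure N by (rule assms(1))
  have eq: "measure N {y-r..y+r} = measure N {..y+r} - measure N {..<y-r}" for y
  proof -
    have "{y-r..y+r} = {..y+r} - {..<y-r}" by auto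
    moreover have "{..<y-r} \<subseteq> {..y+r}" using assms(3) by auto
    ultimately show ?thesis using assms(2) by (simp add: finite_measure_Diff)
  qed
  have m1: "mono (\<lambda>t. measure N {..t})"
    using assms(2) by (intro monoI finite_measure_mono) auto
  have m2: "mono (\<lambda>t. measure N {..<t})"
    using assms(2) by (intro monoI finite_measure_mono) auto
  have "(\<lambda>y. measure N {..y+r}) \<in> borel_measurable borel"
    using borel_measurable_mono[OF m1] by (rule measurable_compose[rotated]) simp
  moreover have "(\<lambda>y. measure N {..<y-r}) \<in> borel_measurable borel"
    using borel_measurable_mono[OF m2] by (rule measurable_compose[rotated]) simp
  ultimately show ?thesis unfolding eq by (rule borel_measurable_diff)
qed

definition NN where "NN b \<gamma> \<phi> x = distr (nuN b) borel (Ssum b \<gamma> \<phi> x)"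
definition AA where "AA b a = {j \<in> space (nuN b). j 1 = a}"
definition NA where "NA b \<gamma> \<phi> x a = distr (restrict_space (nuN b) (AA b a)) borel (Ssum b \<gamma> \<phi> x)"
definition GG where "GG b \<gamma> \<phi> x k a y =
  (let q = measure (NA b \<gamma> \<phi> x a) {y - \<gamma>^k..y + \<gamma>^k} / measure (NN b \<gamma> \<phi> x) {y - \<gamma>^k..y + \<gamma>^k}
   in if q > 0 then ennreal (- ln q) else \<infinity>)"
definition HH where "HH b \<gamma> \<phi> x a y = (SUP k\<in>{1..}. GG b \<gamma> \<phi> x k a y)"

lemma comp1_meas: "(\<lambda>j. j 1) \<in> measurable (nuN b) (count_space UNIV)"
proof -
  have "(\<lambda>j. j 1) \<in> measurable (nuN b) (uniform_count_measure {..<b})"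
    unfolding nuN_def by (intro measurable_component_singleton) auto
  then have "(\<lambda>j. j 1) \<in> measurable (nuN b) (count_space {..<b})"
    by (simp add: measurable_def sets_uniform_count_measure space_uniform_count_measure)
  moreover have "(\<lambda>n. n) \<in> measurable (count_space {..<b}) (count_space (UNIV::nat set))"
    by (simp add: measurable_count_space_eq1)
  ultimately show ?thesis using measurable_compose by blast
qed

lemma AA_sets: "AA b a \<in> sets (nuN b)"
proof -
  have "AA b a = (\<lambda>j. j 1) -` {a} \<inter> space (nuN b)" unfolding AA_def by auto
  also have "\<dots> \<in> sets (nuN b)"
    using comp1_meas[of b] by (intro measurable_sets) auto
  finally show ?thesis .
qed

lemma BT_sets: "BT b p r \<in> sets (ambient b)"
proof -
  have m: "(\<lambda>q. fst (snd q)) \<in> borel_measurable (ambient b)"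
    unfolding ambient_def by measurable
  have "BT b p r = (\<lambda>q. fst (snd q)) -` {fst (snd p) - r..fst (snd p) + r} \<inter> space (ambient b)"
    unfolding BT_def by (auto simp: abs_le_iff)
  also have "\<dots> \<in> sets (ambient b)"
    using m by (intro measurable_sets) auto
  finally show ?thesis .
qed

lemma Part_sets: "Part b p \<in> sets (ambient b)"
proof -
  have m0: "(\<lambda>q. fst q 1) \<in> measurable (ambient b) (count_space {..<b})"
    unfolding ambient_def
    by (rule measurable_compose[OF measurable_fst]) (intro measurable_component_singleton, auto)
  moreover have "(\<lambda>n. n) \<in> measurable (count_space {..<b}) (count_space (UNIV::nat set))"
    by (simp add: measurable_count_space_eq1)
  ultimately have m: "(\<lambda>q. fst q 1) \<in> measurable (ambient b) (count_space UNIV)"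
    using measurable_compose by blast
  have "Part b p = (\<lambda>q. fst q 1) -` {fst p 1} \<inter> space (ambient b)" unfolding Part_def by auto
  also have "\<dots> \<in> sets (ambient b)"
    using m by (intro measurable_sets) auto
  finally show ?thesis .
qed

lemma gk_eq:
  assumes phim: "\<phi> \<in> borel_measurable borel" and x: "x \<in> {0..<1}"
    and p: "p \<in> space (ambient b)" and px: "snd (snd p) = x"
  shows "gk b \<gamma> \<phi> k p = GG b \<gamma> \<phi> x k (fst p 1) (fst (snd p))"
proof -
  define M where "M = nuN b"
  define F where "F = (\<lambda>j. (j, Ssum b \<gamma> \<phi> x j, x))"
  define y where "y = fst (snd p)"
  define r :: real where "r = \<gamma>^k"
  define a where "a = fst p 1"
  have Fm: "F \<in> measurable M (ambient b)" unfolding F_def M_def by (rule F_meas[OF phim x])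
  have Sm: "Ssum b \<gamma> \<phi> x \<in> borel_measurable M" unfolding M_def using Ssum_meas[OF phim] by simp
  have Fsp: "F j \<in> space (ambient b)" if "j \<in> space M" for j using Fm that by (rule measurable_space)
  have h1: "measure (mu b \<gamma> \<phi> x) (BT b p r) = measure (NN b \<gamma> \<phi> x) {y-r..y+r}"
  proof -
    have "measure (mu b \<gamma> \<phi> x) (BT b p r) = measure M (F -` BT b p r \<inter> space M)"
      unfolding mu_def M_def[symmetric] F_def[symmetric] by (rule measure_distr[OF Fm BT_sets])
    also have "F -` BT b p r \<inter> space M = Ssum b \<gamma> \<phi> x -` {y-r..y+r} \<inter> space M"
      using Fsp unfolding BT_def y_def by (auto simp: F_def abs_le_iff)
    also have "measure M \<dots> = measure (NN b \<gamma> \<phi> x) {y-r..y+r}"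
      unfolding NN_def M_def[symmetric] by (rule measure_distr[symmetric, OF Sm]) simp
    finally show ?thesis .
  qed
  have h2: "measure (mu b \<gamma> \<phi> x) (BT b p r \<inter> Part b p) = measure (NA b \<gamma> \<phi> x a) {y-r..y+r}"
  proof -
    have "measure (mu b \<gamma> \<phi> x) (BT b p r \<inter> Part b p) = measure M (F -` (BT b p r \<inter> Part b p) \<inter> space M)"
      unfolding mu_def M_def[symmetric] F_def[symmetric]
      by (rule measure_distr[OF Fm]) (intro sets.Int BT_sets Part_sets)
    also have "F -` (BT b p r \<inter> Part b p) \<inter> space M = Ssum b \<gamma> \<phi> x -` {y-r..y+r} \<inter> (AA b a \<inter> space M)"
      using Fsp unfolding BT_def Part_def y_def a_def AA_def M_def by (auto simp: F_def abs_le_iff)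
    also have "measure M \<dots> = measure (restrict_space M (AA b a)) (Ssum b \<gamma> \<phi> x -` {y-r..y+r} \<inter> (AA b a \<inter> space M))"
      using AA_sets[of b a] unfolding M_def
      by (intro measure_restrict_space[symmetric]) (auto simp: AA_def)
    also have "\<dots> = measure (NA b \<gamma> \<phi> x a) {y-r..y+r}"
      unfolding NA_def M_def[symmetric]
      by (rule measure_distr[symmetric, OF measurable_restrict_space1[OF Sm], simplified space_restrict_space]) (auto simp: Int_commute)
    finally show ?thesis .
  qed
  show ?thesis
    unfolding gk_def GG_def Let_def px h1[unfolded r_def y_def] h2[unfolded r_def y_def a_def] ..
qed

lemma fin_nuN: "b \<ge> 1 \<Longrightarrow> finite_measure (nuN b)"
  using prob_nuN by (simp add: prob_space_def)

lemma NN_prob: "b \<ge> 1 \<Longrightarrow> \<phi> \<in> borel_measurable borel \<Longrightarrow> prob_space (NN b \<gamma> \<phi> x)"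
  unfolding NN_def by (rule prob_space.prob_space_distr[OF prob_nuN Ssum_meas])

lemma NN_fin: "b \<ge> 1 \<Longrightarrow> \<phi> \<in> borel_measurable borel \<Longrightarrow> finite_measure (NN b \<gamma> \<phi> x)"
  using NN_prob by (simp add: prob_space_def)

lemma NA_fin:
  assumes "b \<ge> 1" "\<phi> \<in> borel_measurable borel"
  shows "finite_measure (NA b \<gamma> \<phi> x a)"
proof -
  have "finite_measure (restrict_space (nuN b) (AA b a))"
    using assms(1) by (intro finite_measure_restrict_space fin_nuN AA_sets)
  moreover have "Ssum b \<gamma> \<phi> x \<in> borel_measurable (restrict_space (nuN b) (AA b a))"
    using Ssum_meas[OF assms(2)] by (intro measurable_restrict_space1) simp
  ultimately show ?thesis unfolding NA_def by (rule finite_measure.finite_measure_distr)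
qed

lemma GG_meas:
  assumes "b \<ge> 1" "\<phi> \<in> borel_measurable borel" "\<gamma> > 0"
  shows "GG b \<gamma> \<phi> x k a \<in> borel_measurable borel"
proof -
  have [measurable]: "(\<lambda>y. measure (NA b \<gamma> \<phi> x a) {y - \<gamma>^k..y + \<gamma>^k}) \<in> borel_measurable borel"
    using assms by (intro measure_interval_meas NA_fin) (auto simp: NA_def)
  have [measurable]: "(\<lambda>y. measure (NN b \<gamma> \<phi> x) {y - \<gamma>^k..y + \<gamma>^k}) \<in> borel_measurable borel"
    using assms by (intro measure_interval_meas NN_fin) (auto simp: NN_def)
  show ?thesis unfolding GG_def Let_def by measurable
qed

lemma HH_meas:
  assumes "b \<ge> 1" "\<phi> \<in> borel_measurable borel" "\<gamma> > 0"
  shows "HH b \<gamma> \<phi> x a \<in> borel_measurable borel"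
  unfolding HH_def using GG_meas[OF assms] by (intro borel_measurable_SUP) auto

lemma NA_emeasure:
  assumes "\<phi> \<in> borel_measurable borel" "I \<in> sets borel"
  shows "emeasure (NA b \<gamma> \<phi> x a) I = emeasure (nuN b) (Ssum b \<gamma> \<phi> x -` I \<inter> AA b a)"
proof -
  have Sm: "Ssum b \<gamma> \<phi> x \<in> borel_measurable (restrict_space (nuN b) (AA b a))"
    using Ssum_meas[OF assms(1)] by (intro measurable_restrict_space1) simp
  have sp: "AA b a \<inter> space (nuN b) = AA b a" by (auto simp: AA_def)
  have "emeasure (NA b \<gamma> \<phi> x a) I = emeasure (restrict_space (nuN b) (AA b a)) (Ssum b \<gamma> \<phi> x -` I \<inter> (AA b a))"
    unfolding NA_def using emeasure_distr[OF Sm, of I] assms(2) by (simp add: space_restrict_space sp)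
  also have "\<dots> = emeasure (nuN b) (Ssum b \<gamma> \<phi> x -` I \<inter> AA b a)"
    using AA_sets[of b a] sp by (intro emeasure_restrict_space) auto
  finally show ?thesis .
qed

lemma NN_emeasure:
  assumes "\<phi> \<in> borel_measurable borel" "I \<in> sets borel"
  shows "emeasure (NN b \<gamma> \<phi> x) I = emeasure (nuN b) (Ssum b \<gamma> \<phi> x -` I \<inter> space (nuN b))"
  unfolding NN_def using emeasure_distr[OF Ssum_meas[OF assms(1)] assms(2)] .

lemma NA_le_NN:
  assumes "b \<ge> 1" "\<phi> \<in> borel_measurable borel" "I \<in> sets borel"
  shows "measure (NA b \<gamma> \<phi> x a) I \<le> measure (NN b \<gamma> \<phi> x) I"
proof -
  have "emeasure (NA b \<gamma> \<phi> x a) I \<le> emeasure (NN b \<gamma> \<phi> x) I"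
    unfolding NA_emeasure[OF assms(2,3)] NN_emeasure[OF assms(2,3)]
    by (intro emeasure_mono) (auto simp: AA_def intro: measurable_sets[OF Ssum_meas[OF assms(2)] assms(3)])
  then show ?thesis
    using finite_measure.emeasure_eq_measure[OF NA_fin[OF assms(1,2)]]
          finite_measure.emeasure_eq_measure[OF NN_fin[OF assms(1,2)]]
    by simp
qed

lemma tail_bound:
  assumes b: "b \<ge> 1" and phim: "\<phi> \<in> borel_measurable borel" and g: "\<gamma> > 0"
  shows "emeasure (nuN b) {j\<in>space (nuN b). j 1 = a \<and> of_nat n < HH b \<gamma> \<phi> x a (Ssum b \<gamma> \<phi> x j)}
          \<le> ennreal (2 * exp (- real n))"
proof -
  define E where "E = {y. of_nat n < HH b \<gamma> \<phi> x a y}"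
  have Em: "E \<in> sets borel"
  proof -
    have [measurable]: "HH b \<gamma> \<phi> x a \<in> borel_measurable borel" by (rule HH_meas[OF b phim g])
    show ?thesis unfolding E_def by measurable
  qed
  have "{j\<in>space (nuN b). j 1 = a \<and> of_nat n < HH b \<gamma> \<phi> x a (Ssum b \<gamma> \<phi> x j)}
        = Ssum b \<gamma> \<phi> x -` E \<inter> AA b a"
    unfolding E_def AA_def by auto
  then have eq: "emeasure (nuN b) {j\<in>space (nuN b). j 1 = a \<and> of_nat n < HH b \<gamma> \<phi> x a (Ssum b \<gamma> \<phi> x j)}
        = emeasure (NA b \<gamma> \<phi> x a) E"
    using NA_emeasure[OF phim Em] by simp
  have "emeasure (NA b \<gamma> \<phi> x a) E \<le> ennreal (2 * exp (- real n) * measure (NN b \<gamma> \<phi> x) (space (NN b \<gamma> \<phi> x)))"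
  proof (rule core_cover[OF NN_fin[OF b phim] _ NA_fin[OF b phim] _ _ Em])
    show "sets (NN b \<gamma> \<phi> x) = sets borel" by (simp add: NN_def)
    show "sets (NA b \<gamma> \<phi> x a) = sets borel" by (simp add: NA_def)
    show "0 \<le> exp (- real n)" by simp
    fix y assume "y \<in> E"
    then have "of_nat n < HH b \<gamma> \<phi> x a y" unfolding E_def by simp
    then obtain k where k: "k \<in> {1..}" "of_nat n < GG b \<gamma> \<phi> x k a y"
      unfolding HH_def by (auto simp: less_SUP_iff)
    define r where "r = \<gamma>^k"
    have r0: "r > 0" unfolding r_def using g by simp
    define va where "va = measure (NA b \<gamma> \<phi> x a) {y-r..y+r}"
    define v where "v = measure (NN b \<gamma> \<phi> x) {y-r..y+r}"
    have vav: "va \<le> v" unfolding va_def v_def by (rule NA_le_NN[OF b phim]) simp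
    have va0: "0 \<le> va" unfolding va_def by simp
    have G: "of_nat n < (if va / v > 0 then ennreal (- ln (va / v)) else \<infinity>)"
      using k(2) unfolding GG_def Let_def va_def v_def r_def .
    have "va \<le> exp (- real n) * v"
    proof (cases "va / v > 0")
      case True
      then have "of_nat n < ennreal (- ln (va / v))" using G by simp
      then have "real n < - ln (va / v)"
        by (metis ennreal_less_iff ennreal_of_nat_eq_real_of_nat ennreal_less_zero_iff not_less_iff_gr_or_eq of_nat_0_le_iff)
      then have "ln (va / v) < - real n" by simp
      then have "va / v < exp (- real n)" using True by (metis exp_less_cancel_iff exp_ln)
      moreover have "v > 0" using True va0 vav by (metis divide_le_0_iff not_le order.trans)
      ultimately show ?thesis by (simp add: divide_less_eq less_imp_le)
    next
      case False
      then have "va \<le> 0 \<or> v \<le> 0" using va0 by (metis divide_pos_pos not_le)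
      moreover have "0 \<le> v" unfolding v_def by simp
      ultimately show ?thesis using va0 vav by (metis exp_gt_zero mult_nonneg_nonneg order.trans less_imp_le order.antisym)
    qed
    then show "\<exists>r>0. measure (NA b \<gamma> \<phi> x a) {y - r..y + r} \<le> exp (- real n) * measure (NN b \<gamma> \<phi> x) {y - r..y + r}"
      using r0 unfolding va_def v_def by blast
  qed
  also have "measure (NN b \<gamma> \<phi> x) (space (NN b \<gamma> \<phi> x)) = 1"
    using NN_prob[OF b phim] by (simp add: prob_space.prob_space)
  finally show ?thesis using eq by simp
qed

lemma layer:
  fixes v :: ennreal
  shows "v \<le> (\<Sum>n. if of_nat n < v then 1 else 0)"
proof -
  define S where "S = (\<Sum>n. if of_nat n < v then 1 else (0::ennreal))"
  have key: "of_nat m \<le> S" if "\<forall>n<m. of_nat n < v" for m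
  proof -
    have "(\<Sum>n<m. if of_nat n < v then 1 else (0::ennreal)) = of_nat m"
      using that by simp
    moreover have "(\<Sum>n<m. if of_nat n < v then 1 else (0::ennreal)) \<le> S"
      unfolding S_def by (intro sum_le_suminf) auto
    ultimately show ?thesis by simp
  qed
  show ?thesis
  proof (cases "v = \<infinity>")
    case True
    then have "\<forall>m. of_nat m \<le> S" using key by (simp add: of_nat_less_top)
    then have "(SUP m. of_nat m :: ennreal) \<le> S" by (intro SUP_least) auto
    then have "S = \<infinity>" by (simp add: ennreal_SUP_of_nat_eq_top top_unique)
    then show ?thesis unfolding S_def by simp
  next
    case False
    then obtain t where t: "v = ennreal t" "t \<ge> 0" by (cases v) auto
    define m where "m = nat \<lceil>t\<rceil>"
    have "\<forall>n<m. of_nat n < v"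
    proof (intro allI impI)
      fix n assume "n < m"
      then have "real n < t" unfolding m_def by linarith
      then show "of_nat n < v" unfolding t(1) using t(2)
        by (simp add: ennreal_of_nat_eq_real_of_nat ennreal_less_iff)
    qed
    then have "of_nat m \<le> S" by (rule key)
    moreover have "v \<le> of_nat m"
    proof -
      have "t \<le> real m" unfolding m_def by linarith
      then show ?thesis unfolding t(1) by (simp add: ennreal_of_nat_eq_real_of_nat ennreal_leI)
    qed
    ultimately show ?thesis unfolding S_def by (rule order_trans[rotated])
  qed
qed

lemma f_meas:
  assumes b: "b \<ge> 1" and phim: "\<phi> \<in> borel_measurable borel" and g: "\<gamma> > 0"
  shows "(\<lambda>j. HH b \<gamma> \<phi> x (j 1) (Ssum b \<gamma> \<phi> x j)) \<in> borel_measurable (nuN b)"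
proof (rule measurable_compose_countable'[where f="\<lambda>a j. HH b \<gamma> \<phi> x a (Ssum b \<gamma> \<phi> x j)" and I=UNIV, OF _ comp1_meas])
  fix a :: nat assume "a \<in> UNIV"
  show "(\<lambda>j. HH b \<gamma> \<phi> x a (Ssum b \<gamma> \<phi> x j)) \<in> borel_measurable (nuN b)"
    using HH_meas[OF b phim g] Ssum_meas[OF phim] by (rule measurable_compose[rotated])
qed simp

lemma int_bound:
  assumes b: "b \<ge> 1" and phim: "\<phi> \<in> borel_measurable borel" and g: "\<gamma> > 0"
  shows "(\<integral>\<^sup>+ j. HH b \<gamma> \<phi> x (j 1) (Ssum b \<gamma> \<phi> x j) \<partial>nuN b)
         \<le> (\<Sum>n. ennreal (2 * real b * exp (- real n)))"
proof -
  define f where "f = (\<lambda>j. HH b \<gamma> \<phi> x (j 1) (Ssum b \<gamma> \<phi> x j))"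
  have fm[measurable]: "f \<in> borel_measurable (nuN b)" unfolding f_def by (rule f_meas[OF b phim g])
  define L where "L = (\<lambda>n. {j\<in>space (nuN b). of_nat n < f j})"
  have Lm: "L n \<in> sets (nuN b)" for n unfolding L_def by measurable
  have "(\<integral>\<^sup>+ j. f j \<partial>nuN b) \<le> (\<integral>\<^sup>+ j. (\<Sum>n. indicator (L n) j) \<partial>nuN b)"
  proof (rule nn_integral_mono)
    fix j assume "j \<in> space (nuN b)"
    then have "(\<Sum>n. indicator (L n) j) = (\<Sum>n. if of_nat n < f j then 1 else (0::ennreal))"
      unfolding L_def by (simp add: indicator_def of_bool_def)
    then show "f j \<le> (\<Sum>n. indicator (L n) j)" using layer[of "f j"] by simp
  qed
  also have "\<dots> = (\<Sum>n. emeasure (nuN b) (L n))"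
    using Lm by (subst nn_integral_suminf) auto
  also have "\<dots> \<le> (\<Sum>n. ennreal (2 * real b * exp (- real n)))"
  proof (rule suminf_le)
    fix n
    define Q where "Q = (\<lambda>a. {j\<in>space (nuN b). j 1 = a \<and> of_nat n < HH b \<gamma> \<phi> x a (Ssum b \<gamma> \<phi> x j)})"
    have Qm: "Q a \<in> sets (nuN b)" for a
    proof -
      have [measurable]: "(\<lambda>j. HH b \<gamma> \<phi> x a (Ssum b \<gamma> \<phi> x j)) \<in> borel_measurable (nuN b)"
        using HH_meas[OF b phim g] Ssum_meas[OF phim] by (rule measurable_compose[rotated])
      have [measurable]: "(\<lambda>j. j 1) \<in> measurable (nuN b) (count_space UNIV)" by (rule comp1_meas)
      show ?thesis unfolding Q_def by measurable
    qed
    have "L n \<subseteq> (\<Union>a\<in>{..<b}. Q a)"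
    proof
      fix j assume "j \<in> L n"
      then have j: "j \<in> space (nuN b)" "of_nat n < f j" unfolding L_def by auto
      then have "j 1 < b" unfolding space_nuN by (auto simp: PiE_def Pi_def)
      then show "j \<in> (\<Union>a\<in>{..<b}. Q a)" using j unfolding Q_def f_def by auto
    qed
    then have "emeasure (nuN b) (L n) \<le> emeasure (nuN b) (\<Union>a\<in>{..<b}. Q a)"
      using Qm by (intro emeasure_mono) auto
    also have "\<dots> \<le> (\<Sum>a<b. emeasure (nuN b) (Q a))"
      using Qm by (intro emeasure_subadditive_finite) auto
    also have "\<dots> \<le> (\<Sum>a<b. ennreal (2 * exp (- real n)))"
      unfolding Q_def by (intro sum_mono tail_bound[OF b phim g])
    also have "\<dots> = ennreal (2 * real b * exp (- real n))"
      by (simp add: ennreal_of_nat_eq_real_of_nat ennreal_mult'[symmetric] mult.commute mult.left_commute)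
    finally show "emeasure (nuN b) (L n) \<le> ennreal (2 * real b * exp (- real n))" .
  qed auto
  finally show ?thesis unfolding f_def .
qed

lemma C_finite: "(\<Sum>n. ennreal (2 * real b * exp (- real n))) < \<infinity>"
proof -
  have eq: "exp (- real n) = exp (-1) ^ n" for n
    using exp_of_nat_mult[of n "-1::real"] by simp
  have "summable (\<lambda>n. exp (-1::real) ^ n)" by (rule summable_geometric) simp
  then have "summable (\<lambda>n. 2 * real b * exp (- real n))"
    unfolding eq by (rule summable_mult)
  then have "(\<Sum>n. ennreal (2 * real b * exp (- real n))) = ennreal (\<Sum>n. 2 * real b * exp (- real n))"
    by (intro suminf_ennreal2) auto
  then show ?thesis by simp
qed

lemma fstp1_meas: "(\<lambda>q. fst q 1) \<in> measurable (ambient b) (count_space UNIV)"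
proof -
  have m0: "(\<lambda>q. fst q 1) \<in> measurable (ambient b) (count_space {..<b})"
    unfolding ambient_def
    by (rule measurable_compose[OF measurable_fst]) (intro measurable_component_singleton, auto)
  moreover have "(\<lambda>n. n) \<in> measurable (count_space {..<b}) (count_space (UNIV::nat set))"
    by (simp add: measurable_count_space_eq1)
  ultimately show ?thesis using measurable_compose by blast
qed

lemma per_x_bound:
  assumes b: "b \<ge> 1" and phim: "\<phi> \<in> borel_measurable borel" and g: "\<gamma> > 0" and x: "x \<in> {0..<1}"
  shows "(\<integral>\<^sup>+ p. (SUP k\<in>{1..}. gk b \<gamma> \<phi> k p) \<partial>(mu b \<gamma> \<phi> x))
         \<le> (\<Sum>n. ennreal (2 * real b * exp (- real n)))"
proof -
  define F where "F = (\<lambda>j. (j, Ssum b \<gamma> \<phi> x j, x))"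
  have Fm: "F \<in> measurable (nuN b) (ambient b)" unfolding F_def by (rule F_meas[OF phim x])
  define h :: "(nat \<Rightarrow> nat) \<times> real \<times> real \<Rightarrow> ennreal" where "h = (\<lambda>p. if snd (snd p) = x then HH b \<gamma> \<phi> x (fst p 1) (fst (snd p)) else \<infinity>)"
  have hm0: "(\<lambda>p. HH b \<gamma> \<phi> x (fst p 1) (fst (snd p))) \<in> borel_measurable (ambient b)"
  proof (rule measurable_compose_countable'[where f="\<lambda>a p. HH b \<gamma> \<phi> x a (fst (snd p))" and I=UNIV, OF _ fstp1_meas])
    fix a :: nat assume "a \<in> UNIV"
    have "(\<lambda>p. fst (snd p)) \<in> borel_measurable (ambient b)"
      unfolding ambient_def by measurable
    then show "(\<lambda>p. HH b \<gamma> \<phi> x a (fst (snd p))) \<in> borel_measurable (ambient b)"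
      using HH_meas[OF b phim g] by (rule measurable_compose)
  qed simp
  have hm: "h \<in> borel_measurable (ambient b)"
  proof -
    have s1: "(\<lambda>p. snd (snd p)) \<in> measurable (ambient b) (restrict_space lborel {0..<1})"
      unfolding ambient_def by measurable
    have s2: "(\<lambda>t::real. t) \<in> measurable (restrict_space lborel {0..<1}) borel"
      by (intro measurable_restrict_space1) simp
    have [measurable]: "(\<lambda>p. snd (snd p)) \<in> borel_measurable (ambient b)"
      using measurable_compose[OF s1 s2] by simp
    note [measurable] = hm0
    show ?thesis unfolding h_def by measurable
  qed
  have "(\<integral>\<^sup>+ p. (SUP k\<in>{1..}. gk b \<gamma> \<phi> k p) \<partial>(mu b \<gamma> \<phi> x)) \<le> (\<integral>\<^sup>+ p. h p \<partial>(mu b \<gamma> \<phi> x))"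
  proof (rule nn_integral_mono)
    fix p assume "p \<in> space (mu b \<gamma> \<phi> x)"
    then have p: "p \<in> space (ambient b)" by (simp add: mu_def)
    show "(SUP k\<in>{1..}. gk b \<gamma> \<phi> k p) \<le> h p"
    proof (cases "snd (snd p) = x")
      case True
      then have "(SUP k\<in>{1..}. gk b \<gamma> \<phi> k p) = HH b \<gamma> \<phi> x (fst p 1) (fst (snd p))"
        unfolding HH_def using gk_eq[OF phim x p True] by simp
      then show ?thesis unfolding h_def using True by simp
    next
      case False then show ?thesis unfolding h_def by simp
    qed
  qed
  also have "\<dots> = (\<integral>\<^sup>+ j. h (F j) \<partial>nuN b)"
    unfolding mu_def F_def[symmetric]
    by (rule nn_integral_distr[OF Fm]) (simp add: hm)
  also have "\<dots> = (\<integral>\<^sup>+ j. HH b \<gamma> \<phi> x (j 1) (Ssum b \<gamma> \<phi> x j) \<partial>nuN b)"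
    unfolding h_def F_def by simp
  also have "\<dots> \<le> (\<Sum>n. ennreal (2 * real b * exp (- real n)))"
    by (rule int_bound[OF b phim g])
  finally show ?thesis .
qed

theorem lemma9p2:
  fixes b :: nat and \<gamma> :: real and \<phi> :: "real \<Rightarrow> real"
  assumes "b \<ge> 2"
    and "0 < \<gamma>" "\<gamma> < 1"
    and "\<forall>t. \<phi> (t + 1) = \<phi> t"
    and "\<exists>L. lipschitz_on L UNIV \<phi>"
  shows "(SUP x\<in>{0..<1}. \<integral>\<^sup>+ p. (SUP k\<in>{1..}. gk b \<gamma> \<phi> k p) \<partial>(mu b \<gamma> \<phi> x)) < \<infinity>"
proof -
  have b: "b \<ge> 1" using assms(1) by simp
  have phim: "\<phi> \<in> borel_measurable borel" by (rule lip_meas[OF assms(5)])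
  have "(SUP x\<in>{0..<1}. \<integral>\<^sup>+ p. (SUP k\<in>{1..}. gk b \<gamma> \<phi> k p) \<partial>(mu b \<gamma> \<phi> x))
        \<le> (\<Sum>n. ennreal (2 * real b * exp (- real n)))"
    by (rule SUP_least) (rule per_x_bound[OF b phim assms(2)])
  also have "\<dots> < \<infinity>" by (rule C_finite)
  finally show ?thesis .
qed

end
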